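(* Let $n\ge4$ be an even integer. For $1\le r\le n-1$ let $U^r_n=\{(k,a,b)\in(\mathbb{R}\setminus(B_n\cup C_n))\times\mathbb{R}\times\mathbb{R}: k\neq0,\ \mathrm{rank}(B^{(k,a,b)}_n)\le r,\ 4a^3+27b^2=0\}\setminus\{(k,0,0):k\in\mathbb{R}\}$. Then (a) $U^{n-1}_n=\{(k,a^{(n)}_{k,2},b^{(n)}_{k,2}): k\in\mathbb{R}\setminus(B_n\cup C_n)\}\cup\{(k,a^{(n)}_{k,3},b^{(n)}_{k,3}): k\in\mathbb{R}\setminus(B_n\cup C_n)\}$; (b) the matrix $B^{(k,a,b)}_n$ has rank exactly $n-1$ for all but finitely many triples $(k,a,b)\in U^{n-1}_n$; (c) for each $1\le r\le n-2$, the matrix $B^{(k,a,b)}_n$ has rank $r$ for only finitely many triples $(k,a,b)\in U^{n-1}_n$.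
   Context: For real $k,a,b$, the generalized $k$-FL sequence is $S^{(a,b)}_{k,0}=2b$, $S^{(a,b)}_{k,1}=bk+a$, $S^{(a,b)}_{k,m}=kS^{(a,b)}_{k,m-1}+S^{(a,b)}_{k,m-2}$. $B^{(k,a,b)}_n$ is the $n\times n$ circulant matrix whose $(i,j)$ entry is $S^{(a,b)}_{k,j-i+1}$ if $j\ge i$ and $S^{(a,b)}_{k,n+j-i+1}$ if $j<i$. Define $f_m,g_m\in\mathbb{Z}[T]$ by $f_0=0,f_1=1,g_0=2,g_1=T$, $f_m=Tf_{m-1}+f_{m-2}$, $g_m=Tg_{m-1}+g_{m-2}$; $F_n=f_{n+1}-f_n$, $G_n=g_{n+1}-g_n$, $P_n=f_{n+1}+f_n$, $Q_n=g_{n+1}+g_n$. $B_n=\{k: F_n(k)-1=0\text{ or }G_n(k)-k+2=0\}$, $C_n=\{k: P_n(k)-1=0\text{ or }Q_n(k)-k-2=0\}$. Type 2 pair: $a^{(n)}_{k,2}=-\frac{27(F_n(k)-1)^2}{4(G_n(k)-k+2)^2}$, $b^{(n)}_{k,2}=\frac{27(F_n(k)-1)^3}{4(G_n(k)-k+2)^3}$; Type 3 pair: $a^{(n)}_{k,3}=-\frac{27(P_n(k)-1)^2}{4(Q_n(k)-k-2)^2}$, $b^{(n)}_{k,3}=\frac{27(P_n(k)-1)^3}{4(Q_n(k)-k-2)^3}$. The condition $4a^3+27b^2=0$ means the curve $y^2=x^3+ax+b$ is singular. *)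

theory Defs
  imports "Jordan_Normal_Form.DL_Rank" "HOL-Computational_Algebra.Polynomial"
begin

fun FLseq :: "real \<Rightarrow> real \<Rightarrow> real \<Rightarrow> nat \<Rightarrow> real" where
  "FLseq k a b 0 = 2 * b"
| "FLseq k a b (Suc 0) = b * k + a"
| "FLseq k a b (Suc (Suc m)) = k * FLseq k a b (Suc m) + FLseq k a b m"

text \<open>The n x n circulant matrix B_n^(k,a,b); indices are 0-based here,
  entry (i,j) is S_{j-i+1} if j >= i and S_{n+j-i+1} if j < i.\<close>
definition Bmat :: "nat \<Rightarrow> real \<Rightarrow> real \<Rightarrow> real \<Rightarrow> real mat" where
  "Bmat n k a b = mat n n (\<lambda>(i, j).
     if j \<ge> i then FLseq k a b (j - i + 1) else FLseq k a b (n + j - i + 1))"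

definition matrank :: "nat \<Rightarrow> real mat \<Rightarrow> nat" where
  "matrank n A = vec_space.rank n A"

fun fpoly :: "nat \<Rightarrow> int poly" where
  "fpoly 0 = 0"
| "fpoly (Suc 0) = 1"
| "fpoly (Suc (Suc m)) = [:0, 1:] * fpoly (Suc m) + fpoly m"

fun gpoly :: "nat \<Rightarrow> int poly" where
  "gpoly 0 = [:2:]"
| "gpoly (Suc 0) = [:0, 1:]"
| "gpoly (Suc (Suc m)) = [:0, 1:] * gpoly (Suc m) + gpoly m"

definition Fp :: "nat \<Rightarrow> int poly" where "Fp n = fpoly (n + 1) - fpoly n"
definition Gp :: "nat \<Rightarrow> int poly" where "Gp n = gpoly (n + 1) - gpoly n"
definition Pp :: "nat \<Rightarrow> int poly" where "Pp n = fpoly (n + 1) + fpoly n"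
definition Qp :: "nat \<Rightarrow> int poly" where "Qp n = gpoly (n + 1) + gpoly n"

definition ev :: "int poly \<Rightarrow> real \<Rightarrow> real" where
  "ev p k = poly (map_poly of_int p) k"

definition Bset :: "nat \<Rightarrow> real set" where
  "Bset n = {k. ev (Fp n) k - 1 = 0 \<or> ev (Gp n) k - k + 2 = 0}"

definition Cset :: "nat \<Rightarrow> real set" where
  "Cset n = {k. ev (Pp n) k - 1 = 0 \<or> ev (Qp n) k - k - 2 = 0}"

definition a2 :: "nat \<Rightarrow> real \<Rightarrow> real" where
  "a2 n k = - (27 * (ev (Fp n) k - 1)^2) / (4 * (ev (Gp n) k - k + 2)^2)"
definition b2 :: "nat \<Rightarrow> real \<Rightarrow> real" where
  "b2 n k = (27 * (ev (Fp n) k - 1)^3) / (4 * (ev (Gp n) k - k + 2)^3)"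
definition a3 :: "nat \<Rightarrow> real \<Rightarrow> real" where
  "a3 n k = - (27 * (ev (Pp n) k - 1)^2) / (4 * (ev (Qp n) k - k - 2)^2)"
definition b3 :: "nat \<Rightarrow> real \<Rightarrow> real" where
  "b3 n k = (27 * (ev (Pp n) k - 1)^3) / (4 * (ev (Qp n) k - k - 2)^3)"

definition Uset :: "nat \<Rightarrow> nat \<Rightarrow> (real \<times> real \<times> real) set" where
  "Uset n r = {(k, a, b). k \<notin> Bset n \<union> Cset n \<and> k \<noteq> 0 \<and>
      matrank n (Bmat n k a b) \<le> r \<and> 4 * a^3 + 27 * b^2 = 0}
    - {(k, 0, 0) | k. True}"

end

theory Submission imports Defs begin

lemma mp_add: "map_poly (of_int::int\<Rightarrow>real) (p + q) = map_poly of_int p + map_poly of_int q"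
  by (rule poly_eqI) (simp add: coeff_map_poly)
lemma mp_diff: "map_poly (of_int::int\<Rightarrow>real) (p - q) = map_poly of_int p - map_poly of_int q"
  by (rule poly_eqI) (simp add: coeff_map_poly)
lemma ev_add: "ev (p + q) k = ev p k + ev q k" unfolding ev_def by (simp add: mp_add)
lemma ev_diff: "ev (p - q) k = ev p k - ev q k" unfolding ev_def by (simp add: mp_diff)
lemma ev_X: "ev ([:0,1:] * p) k = k * ev p k" unfolding ev_def by (simp add: map_poly_pCons)
lemma ev_pC: "ev (pCons 0 p) k = k * ev p k" unfolding ev_def by (simp add: map_poly_pCons)

lemma S_poly: "FLseq k a b m = b * ev (gpoly m) k + a * ev (fpoly m) k"
proof (induction m rule: fpoly.induct)
  case 1 then show ?case by (simp add: ev_def map_poly_pCons)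
next
  case 2 then show ?case by (simp add: ev_def map_poly_pCons)
next
  case (3 m) then show ?case by (simp add: ev_add ev_pC algebra_simps)
qed

lemma f_at0: "ev (fpoly m) 0 = (if odd m then 1 else 0)"
  by (induction m rule: fpoly.induct) (simp_all add: ev_def map_poly_pCons ev_add[unfolded ev_def] ev_X[unfolded ev_def])

lemma zero_in_B: "even n \<Longrightarrow> (0::real) \<in> Bset n"
  by (simp add: Bset_def Fp_def ev_diff f_at0)

lemma sum_tel:
  "(\<Sum>m<N. FLseq k a b (Suc m) * Z m) - k * (\<Sum>m<N. FLseq k a b (Suc m) * Z (Suc m))
     - (\<Sum>m<N. FLseq k a b (Suc m) * Z (Suc (Suc m)))
   = FLseq k a b 1 * Z 0 + FLseq k a b 0 * Z 1 - FLseq k a b (Suc N) * Z N - FLseq k a b N * Z (Suc N)"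
  by (induction N) (simp_all add: algebra_simps)

lemma sum_ones: "k * (\<Sum>m<N. FLseq k a b (Suc m)) = FLseq k a b (Suc N) + FLseq k a b N - FLseq k a b 1 - FLseq k a b 0"
  by (induction N) (simp_all add: algebra_simps)

lemma sum_alt: "k * (\<Sum>m<N. (-1)^m * FLseq k a b (Suc m)) = (-1)^(Suc N) * (FLseq k a b (Suc N) - FLseq k a b N) + (FLseq k a b 1 - FLseq k a b 0)"
  by (induction N) (simp_all add: algebra_simps)

lemma sum_sq: "k * (\<Sum>m<N. (FLseq k a b (Suc m))^2) = FLseq k a b N * FLseq k a b (Suc N) - FLseq k a b 0 * FLseq k a b 1"
  by (induction N) (simp_all add: algebra_simps power2_eq_square)

lemma reindex:
  assumes "i < (n::nat)"
  shows "(\<Sum>j<n. g ((j + n - i) mod n) * x j) = (\<Sum>m<n. g m * x ((i + m) mod n))"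
proof -
  have h1: "((i + m) mod n + n - i) mod n = m" if m: "m < n" for m
  proof (cases "i + m < n")
    case True then show ?thesis using m by (simp add: add.commute)
  next
    case False
    then have "(i + m) mod n = i + m - n" using m assms by (simp add: mod_if)
    then show ?thesis using m False by simp
  qed
  have h2: "(i + (j + n - i) mod n) mod n = j" if j: "j < n" for j
  proof (cases "j < i")
    case True then show ?thesis using j assms by simp
  next
    case False
    then have "(j + n - i) mod n = j - i" using j assms by (simp add: mod_if)
    then show ?thesis using j False by simp
  qed
  show ?thesis
    by (rule sum.reindex_bij_witness[where i = "\<lambda>m. (i + m) mod n" and j = "\<lambda>j. (j + n - i) mod n"])
      (use assms h1 h2 in auto)
qed

lemma kern_rel:
  assumes n: "n > 0"
    and K: "\<forall>i<n. (\<Sum>j<n. FLseq k a b (Suc ((j + n - i) mod n)) * x j) = 0"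
  shows "(FLseq k a b 1 - FLseq k a b (Suc n)) * x (t mod n) + (FLseq k a b 0 - FLseq k a b n) * x (Suc t mod n) = 0"
proof -
  define S where "S = FLseq k a b"
  define X where "X t = x (t mod n)" for t
  define Y where "Y i = (\<Sum>m<n. S (Suc m) * X (i + m))" for i
  have Y0: "Y i = 0" for i
  proof -
    have "Y i = (\<Sum>m<n. S (Suc m) * x ((i mod n + m) mod n))"
      unfolding Y_def X_def by (simp add: mod_add_left_eq)
    also have "\<dots> = (\<Sum>j<n. S (Suc ((j + n - i mod n) mod n)) * x j)"
      using reindex[of "i mod n" n "\<lambda>m. S (Suc m)" x] n by simp
    also have "\<dots> = 0" using K n unfolding S_def by simp
    finally show ?thesis .
  qed
  have T: "(\<Sum>m<n. S (Suc m) * X (t + m)) - k * (\<Sum>m<n. S (Suc m) * X (t + Suc m))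
     - (\<Sum>m<n. S (Suc m) * X (t + Suc (Suc m)))
   = S 1 * X (t + 0) + S 0 * X (t + 1) - S (Suc n) * X (t + n) - S n * X (t + Suc n)"
    unfolding S_def by (rule sum_tel[where N=n and Z="\<lambda>m. X (t + m)" and k=k and a=a and b=b])
  have "(\<Sum>m<n. S (Suc m) * X (t + m)) = 0" using Y0[of t] unfolding Y_def .
  moreover have "(\<Sum>m<n. S (Suc m) * X (t + Suc m)) = 0" using Y0[of "Suc t"] unfolding Y_def by simp
  moreover have "(\<Sum>m<n. S (Suc m) * X (t + Suc (Suc m))) = 0" using Y0[of "Suc (Suc t)"] unfolding Y_def by simp
  moreover have "X (t + n) = X t" unfolding X_def by simp
  moreover have "X (t + Suc n) = X (Suc t)"
  proof -
    have "t + Suc n = Suc t + n" by simp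
    then show ?thesis unfolding X_def by (simp only: mod_add_self2)
  qed
  ultimately have "S 1 * X t + S 0 * X (Suc t) - S (Suc n) * X t - S n * X (Suc t) = 0"
    using T by simp
  then show ?thesis unfolding S_def X_def by (simp add: algebra_simps)
qed

lemma geo_pow:
  assumes R: "\<And>i. u * X i + v * X (Suc i) = (0::real)" and v: "v \<noteq> 0"
  shows "X i = (- u / v) ^ i * X 0"
proof (induction i)
  case 0 then show ?case by simp
next
  case (Suc i)
  have "X (Suc i) = - u / v * X i" using R[of i] v by (simp add: field_simps)
  then show ?case using Suc by simp
qed

lemma geo1:
  assumes R: "\<And>i. u * X i + v * X (Suc i) = (0::real)" and uv: "u \<noteq> 0 \<or> v \<noteq> 0"
    and P: "X n = X 0" and n: "n > 0" and Z: "X j0 = 0"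
  shows "X i = 0"
proof (cases "v = 0")
  case True
  then have "u \<noteq> 0" using uv by simp
  then show ?thesis using R[of i] True by simp
next
  case False
  note G = geo_pow[of u X v, OF R False]
  show ?thesis
  proof (cases "u = 0")
    case True
    then have XS: "X (Suc j) = 0" for j using R[of j] False by simp
    have "X 0 = 0" using P XS[of "n - 1"] n by simp
    then show ?thesis using G[of i] by simp
  next
    case False
    then have "(- u / v) ^ j0 \<noteq> 0" using \<open>v \<noteq> 0\<close> by simp
    moreover have "(- u / v) ^ j0 * X 0 = 0" using Z G[of j0] by simp
    ultimately have "X 0 = 0" using mult_eq_0_iff by blast
    then show ?thesis using G[of i] by simp
  qed
qed

lemma geo2:
  assumes R: "\<And>i. u * X i + v * X (Suc i) = (0::real)"
    and P: "X n = X 0" and n: "n > 0" and NZ: "X j0 \<noteq> 0"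
  shows "u = v \<or> u = - v"
proof (cases "v = 0")
  case True
  then show ?thesis using R[of j0] NZ by simp
next
  case False
  note G = geo_pow[of u X v, OF R False]
  have X0: "X 0 \<noteq> 0" using G[of j0] NZ by auto
  have "(- u / v) ^ n = 1" using G[of n] P X0 by simp
  then have "\<bar>- u / v\<bar> ^ n = 1" by (metis power_abs abs_one)
  then have A: "\<bar>- u / v\<bar> ^ n = 1 ^ n" by simp
  have "\<bar>- u / v\<bar> = 1" by (rule power_eq_imp_eq_base[OF A]) (simp_all add: n)
  moreover have "\<bar>u\<bar> = \<bar>- u / v\<bar> * \<bar>v\<bar>" using False by (simp add: abs_div)
  ultimately have "\<bar>u\<bar> = \<bar>v\<bar>" by (simp only: mult_1_left)
  then show ?thesis by (cases "u \<ge> 0"; cases "v \<ge> 0") auto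
qed

lemma curve_fwd:
  fixes a b al be :: real
  assumes al: "al \<noteq> 0" and be: "be \<noteq> 0" and L: "a * al + b * be = 0"
    and C: "4 * a^3 + 27 * b^2 = 0" and nz: "a \<noteq> 0 \<or> b \<noteq> 0"
  shows "a = - (27 * al^2) / (4 * be^2) \<and> b = (27 * al^3) / (4 * be^3)"
proof -
  have aeq: "a = - b * be / al" using L al by (simp add: field_simps)
  have b0: "b \<noteq> 0" using nz aeq by auto
  have "4 * (- b * be / al)^3 + 27 * b^2 = 0" using C aeq by simp
  then have "b^2 * (27 * al^3 - 4 * b * be^3) = 0" using al
    by (simp add: field_simps power3_eq_cube power2_eq_square)
  then have "27 * al^3 - 4 * b * be^3 = 0" using b0 by simp
  then have beq: "b = (27 * al^3) / (4 * be^3)" using be by (simp add: field_simps)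
  have "a = - (27 * al^2) / (4 * be^2)" using aeq beq al be
    by (simp add: field_simps power3_eq_cube power2_eq_square)
  then show ?thesis using beq by simp
qed

lemma curve_bwd:
  fixes al be :: real
  assumes al: "al \<noteq> 0" and be: "be \<noteq> 0"
  defines "a \<equiv> - (27 * al^2) / (4 * be^2)" and "b \<equiv> (27 * al^3) / (4 * be^3)"
  shows "a * al + b * be = 0" "4 * a^3 + 27 * b^2 = 0" "a \<noteq> 0"
  unfolding a_def b_def using al be
  by (simp_all add: field_simps power3_eq_cube power2_eq_square)


lemma Bmat_carrier: "Bmat n k a b \<in> carrier_mat n n"
  by (simp add: Bmat_def)

lemma Bmat_idx:
  assumes "i < n" "j < n"
  shows "Bmat n k a b $$ (i, j) = FLseq k a b (Suc ((j + n - i) mod n))"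
proof -
  have E: "Bmat n k a b $$ (i, j) = (if j \<ge> i then FLseq k a b (j - i + 1) else FLseq k a b (n + j - i + 1))"
    unfolding Bmat_def using assms by (simp only: index_mat case_prod_conv)
  show ?thesis
  proof (cases "i \<le> j")
    case True
    have "j + n - i = (j - i) + n" using True by simp
    then have "(j + n - i) mod n = (j - i) mod n" by (simp only: mod_add_self2)
    also have "\<dots> = j - i" using assms by (simp only: mod_less)
    finally show ?thesis using E True by simp
  next
    case False
    have "j + n - i < n" using False assms by linarith
    then have "(j + n - i) mod n = j + n - i" by (rule mod_less)
    moreover have "j + n - i = n + j - i" by simp
    ultimately show ?thesis using E False by simp
  qed
qed

lemma Bmat_mulvec:
  assumes "w \<in> carrier_vec n" "i < n"
  shows "(Bmat n k a b *\<^sub>v w) $ i = (\<Sum>j<n. FLseq k a b (Suc ((j + n - i) mod n)) * w $ j)"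
proof -
  have "(Bmat n k a b *\<^sub>v w) $ i = row (Bmat n k a b) i \<bullet> w"
    using assms Bmat_carrier[of n k a b] by simp
  also have "\<dots> = (\<Sum>j\<in>{0..<n}. row (Bmat n k a b) i $ j * w $ j)"
    using assms by (simp add: scalar_prod_def)
  also have "\<dots> = (\<Sum>j<n. FLseq k a b (Suc ((j + n - i) mod n)) * w $ j)"
    using assms Bmat_carrier[of n k a b] by (auto simp: lessThan_atLeast0 Bmat_idx intro!: sum.cong)
  finally show ?thesis .
qed

lemma Bmat_kernel:
  assumes "w \<in> carrier_vec n"
  shows "(Bmat n k a b *\<^sub>v w = 0\<^sub>v n) \<longleftrightarrow> (\<forall>i<n. (\<Sum>j<n. FLseq k a b (Suc ((j + n - i) mod n)) * w $ j) = 0)"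
proof
  assume "Bmat n k a b *\<^sub>v w = 0\<^sub>v n"
  then show "\<forall>i<n. (\<Sum>j<n. FLseq k a b (Suc ((j + n - i) mod n)) * w $ j) = 0"
    using Bmat_mulvec[OF assms] by (metis index_zero_vec(1))
next
  assume H: "\<forall>i<n. (\<Sum>j<n. FLseq k a b (Suc ((j + n - i) mod n)) * w $ j) = 0"
  show "Bmat n k a b *\<^sub>v w = 0\<^sub>v n"
  proof (rule eq_vecI)
    show "dim_vec (Bmat n k a b *\<^sub>v w) = dim_vec (0\<^sub>v n)" using Bmat_carrier[of n k a b] by simp
    fix i assume "i < dim_vec (0\<^sub>v n)"
    then have i: "i < n" by simp
    have "(Bmat n k a b *\<^sub>v w) $ i = (\<Sum>j<n. FLseq k a b (Suc ((j + n - i) mod n)) * w $ j)"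
      by (rule Bmat_mulvec[OF assms i])
    also have "\<dots> = 0" using H i by blast
    also have "\<dots> = 0\<^sub>v n $ i" using i by (simp only: index_zero_vec)
    finally show "(Bmat n k a b *\<^sub>v w) $ i = 0\<^sub>v n $ i" .
  qed
qed

lemma rank_lt_iff:
  "matrank n (Bmat n k a b) < n \<longleftrightarrow> (\<exists>w. w \<in> carrier_vec n \<and> w \<noteq> 0\<^sub>v n \<and> Bmat n k a b *\<^sub>v w = 0\<^sub>v n)"
proof -
  have C: "Bmat n k a b \<in> carrier_mat n n" by (rule Bmat_carrier)
  have "matrank n (Bmat n k a b) \<le> n" unfolding matrank_def by (rule vec_space.rank_le_nc[OF C])
  then have "matrank n (Bmat n k a b) < n \<longleftrightarrow> det (Bmat n k a b) = 0"
    using vec_space.det_rank_iff[OF C] unfolding matrank_def by auto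
  then show ?thesis using det_0_iff_vec_prod_zero_field[OF C] by simp
qed

lemma S_diff: "FLseq k a b (Suc n) - FLseq k a b n = b * ev (Gp n) k + a * ev (Fp n) k"
  by (simp add: S_poly Gp_def Fp_def ev_diff algebra_simps)

lemma S_sum: "FLseq k a b (Suc n) + FLseq k a b n = b * ev (Qp n) k + a * ev (Pp n) k"
  by (simp add: S_poly Qp_def Pp_def ev_add algebra_simps)

lemma uv_nz:
  assumes k: "k \<noteq> 0" and n: "n \<ge> 2" and ab: "a \<noteq> 0 \<or> b \<noteq> 0"
  shows "FLseq k a b 1 - FLseq k a b (Suc n) \<noteq> 0 \<or> FLseq k a b 0 - FLseq k a b n \<noteq> 0"
proof (rule ccontr)
  assume "\<not> ?thesis"
  then have e1: "FLseq k a b (Suc n) = FLseq k a b 1" and e2: "FLseq k a b n = FLseq k a b 0" by auto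
  have "k * (\<Sum>m<n. (FLseq k a b (Suc m))^2) = 0" using sum_sq[of k a b n] e1 e2 by simp
  then have "(\<Sum>m<n. (FLseq k a b (Suc m))^2) = 0" using k by simp
  then have Z: "\<forall>m\<in>{..<n}. (FLseq k a b (Suc m))^2 = 0"
    by (subst sum_nonneg_eq_0_iff[symmetric]) auto
  have z1: "FLseq k a b 1 = 0" using Z[rule_format, of 0] n by simp
  have z2: "FLseq k a b 2 = 0" using Z[rule_format, of 1] n by (simp add: numeral_2_eq_2)
  have "FLseq k a b 2 = k * FLseq k a b 1 + FLseq k a b 0" by (simp add: numeral_2_eq_2)
  then have "FLseq k a b 0 = 0" using z1 z2 by simp
  then have "b = 0" by simp
  then have "a = 0" using z1 by simp
  then show False using ab \<open>b = 0\<close> by simp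
qed

lemma nonzero_idx:
  assumes "w \<in> carrier_vec n" "w \<noteq> 0\<^sub>v n"
  obtains j where "j < n" "w $ j \<noteq> 0"
proof -
  have "\<exists>j<n. w $ j \<noteq> 0"
  proof (rule ccontr)
    assume "\<not> (\<exists>j<n. w $ j \<noteq> 0)"
    then have "w = 0\<^sub>v n" using assms(1) by (intro eq_vecI) auto
    then show False using assms(2) by simp
  qed
  then show ?thesis using that by blast
qed

lemma kernel_uv:
  assumes n: "n > 0" and w: "w \<in> carrier_vec n" "w \<noteq> 0\<^sub>v n"
    and K: "Bmat n k a b *\<^sub>v w = 0\<^sub>v n"
  shows "FLseq k a b 1 - FLseq k a b (Suc n) = FLseq k a b 0 - FLseq k a b n
       \<or> FLseq k a b 1 - FLseq k a b (Suc n) = - (FLseq k a b 0 - FLseq k a b n)"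
proof -
  have K': "\<forall>i<n. (\<Sum>j<n. FLseq k a b (Suc ((j + n - i) mod n)) * w $ j) = 0"
    using Bmat_kernel[OF w(1)] K by blast
  define X where "X t = w $ (t mod n)" for t
  have R: "(FLseq k a b 1 - FLseq k a b (Suc n)) * X t + (FLseq k a b 0 - FLseq k a b n) * X (Suc t) = 0" for t
    unfolding X_def using kern_rel[OF n, of k a b "\<lambda>j. w $ j", OF K'] .
  have P: "X n = X 0" unfolding X_def by simp
  obtain j0 where j0: "j0 < n" "w $ j0 \<noteq> 0" using nonzero_idx[OF w] by blast
  have "X j0 \<noteq> 0" unfolding X_def using j0 by simp
  then show ?thesis using geo2[of _ X, OF R P n] by blast
qed

lemma kernel_last:
  assumes n: "n > 0"
    and uv: "FLseq k a b 1 - FLseq k a b (Suc n) \<noteq> 0 \<or> FLseq k a b 0 - FLseq k a b n \<noteq> 0"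
    and K: "\<forall>i<n. (\<Sum>j<n. FLseq k a b (Suc ((j + n - i) mod n)) * x j) = 0"
    and L: "x (n - 1) = 0" and j: "j < n"
  shows "x j = 0"
proof -
  define X where "X t = x (t mod n)" for t
  have R: "(FLseq k a b 1 - FLseq k a b (Suc n)) * X t + (FLseq k a b 0 - FLseq k a b n) * X (Suc t) = 0" for t
    unfolding X_def using kern_rel[OF n, of k a b x, OF K] .
  have P: "X n = X 0" unfolding X_def by simp
  have "X (n - 1) = 0" unfolding X_def using L n by simp
  then have "X j = 0" using geo1[of _ X, OF R uv P n] by blast
  then show ?thesis unfolding X_def using j by simp
qed

lemma sum_two:
  assumes "i \<noteq> j" "i \<in> A" "j \<in> A" "finite A"
  shows "(\<Sum>t\<in>A. f t * (if t = i then 1 else if t = j then -1 else 0)) = f i - (f j::real)"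
proof -
  have "(\<Sum>t\<in>A. f t * (if t = i then 1 else if t = j then -1 else 0))
      = (\<Sum>t\<in>A. (if t = i then f t else 0) - (if t = j then f t else 0))"
    using assms(1) by (intro sum.cong) auto
  also have "\<dots> = f i - f j" using assms by (simp add: sum_subtractf)
  finally show ?thesis .
qed

lemma rank_ge:
  assumes n: "n \<ge> 2"
    and uv: "FLseq k a b 1 - FLseq k a b (Suc n) \<noteq> 0 \<or> FLseq k a b 0 - FLseq k a b n \<noteq> 0"
  shows "matrank n (Bmat n k a b) \<ge> n - 1"
proof -
  interpret V: vec_space "TYPE(real)" n .
  define B where "B = Bmat n k a b"
  have Bc: "B \<in> carrier_mat n n" unfolding B_def by (rule Bmat_carrier)
  define A where "A = mat n (n - 1) (\<lambda>(i, j). B $$ (i, j))"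
  have Ac: "A \<in> carrier_mat n (n - 1)" unfolding A_def by simp
  have colA': "col A j = col B j" if "j < n - 1" for j
    by (rule eq_vecI) (use that Ac Bc in \<open>auto simp: A_def\<close>)
  have colA: "cols A ! j = cols B ! j" if "j < n - 1" for j
  proof -
    have "cols A ! j = col A j" using that Ac by simp
    also have "\<dots> = col B j"
      by (rule eq_vecI) (use that Ac Bc in \<open>auto simp: A_def\<close>)
    also have "\<dots> = cols B ! j" using that Bc by simp
    finally show ?thesis .
  qed
  have sub: "set (cols A) \<subseteq> set (cols B)"
  proof
    fix c assume "c \<in> set (cols A)"
    then obtain j where j: "j < length (cols A)" "c = cols A ! j" by (metis in_set_conv_nth)
    then have "j < n - 1" using Ac by simp
    then have "c = cols B ! j" using colA[OF \<open>j < n - 1\<close>] j(2) by (rule_tac trans)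
    moreover have "j < length (cols B)" using \<open>j < n - 1\<close> Bc by simp
    ultimately show "c \<in> set (cols B)" by (metis nth_mem)
  qed
  have kerz: "x j = 0" if K: "\<forall>i<n. (\<Sum>j<n. FLseq k a b (Suc ((j + n - i) mod n)) * x j) = 0"
    and L: "x (n - 1) = 0" and j: "j < n" for x j
    using kernel_last[of n k a b x j] n uv K L j by simp
  have dist: "distinct (cols A)"
  proof (rule ccontr)
    assume "\<not> distinct (cols A)"
    then obtain i j where ij: "i \<noteq> j" "i < length (cols A)" "j < length (cols A)" "cols A ! i = cols A ! j"
      by (metis distinct_conv_nth)
    then have ij': "i < n - 1" "j < n - 1" using Ac by auto
    have "col A i = col A j" using ij Ac by simp
    then have ceq: "col B i = col B j" using colA' ij' by simp
    define x where "x t = (if t = i then 1 else if t = j then -1 else (0::real))" for t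
    have K: "\<forall>r<n. (\<Sum>t<n. FLseq k a b (Suc ((t + n - r) mod n)) * x t) = 0"
    proof (intro allI impI)
      fix r assume r: "r < n"
      have "(\<Sum>t<n. FLseq k a b (Suc ((t + n - r) mod n)) * x t)
          = FLseq k a b (Suc ((i + n - r) mod n)) - FLseq k a b (Suc ((j + n - r) mod n))"
        unfolding x_def by (rule sum_two) (use ij ij' in auto)
      also have "\<dots> = B $$ (r, i) - B $$ (r, j)" using r ij' unfolding B_def by (simp add: Bmat_idx)
      also have "B $$ (r, i) = col B i $ r" using r ij' Bc by simp
      also have "B $$ (r, j) = col B j $ r" using r ij' Bc by simp
      finally show "(\<Sum>t<n. FLseq k a b (Suc ((t + n - r) mod n)) * x t) = 0" using ceq by simp
    qed
    have "x (n - 1) = 0" unfolding x_def using ij' by simp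
    then have "x i = 0" using kerz[OF K] ij' by simp
    then show False unfolding x_def by simp
  qed
  have indpt: "V.lin_indpt (set (cols A))"
  proof (rule ccontr)
    assume "\<not> V.lin_indpt (set (cols A))"
    then obtain w where w: "w \<in> carrier_vec (n - 1)" "w \<noteq> 0\<^sub>v (n - 1)" "A *\<^sub>v w = 0\<^sub>v n"
      using V.lin_depE[OF Ac _ dist] by blast
    define x where "x t = (if t < n - 1 then w $ t else 0)" for t
    have K: "\<forall>r<n. (\<Sum>t<n. FLseq k a b (Suc ((t + n - r) mod n)) * x t) = 0"
    proof (intro allI impI)
      fix r assume r: "r < n"
      have nn: "n = Suc (n - 1)" using n by simp
      have "(\<Sum>t<n. FLseq k a b (Suc ((t + n - r) mod n)) * x t)
          = (\<Sum>t<n - 1. FLseq k a b (Suc ((t + n - r) mod n)) * x t)"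
        by (subst nn, subst lessThan_Suc) (simp add: x_def)
      also have "\<dots> = (\<Sum>t<n - 1. A $$ (r, t) * w $ t)"
        using r unfolding x_def A_def B_def by (intro sum.cong) (auto simp: Bmat_idx)
      also have "\<dots> = row A r \<bullet> w"
        using r Ac w(1) by (simp add: scalar_prod_def lessThan_atLeast0)
      also have "\<dots> = (A *\<^sub>v w) $ r" using r Ac by simp
      also have "\<dots> = 0" using w(3) r by simp
      finally show "(\<Sum>t<n. FLseq k a b (Suc ((t + n - r) mod n)) * x t) = 0" .
    qed
    have "x (n - 1) = 0" unfolding x_def by simp
    have "\<forall>t<n - 1. w $ t = 0"
    proof (intro allI impI)
      fix t assume t: "t < n - 1"
      then have "x t = 0" using kerz[OF K \<open>x (n - 1) = 0\<close>] by simp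
      then show "w $ t = 0" using t unfolding x_def by simp
    qed
    then have "w = 0\<^sub>v (n - 1)" using w(1) by (intro eq_vecI) auto
    then show False using w(2) by simp
  qed
  have "card (set (cols A)) \<le> V.rank B" by (rule V.rank_ge_card_indpt[OF Bc sub indpt])
  moreover have "card (set (cols A)) = n - 1" using distinct_card[OF dist] Ac by simp
  ultimately show ?thesis unfolding matrank_def B_def by simp
qed

lemma neg1_mod:
  assumes "even n"
  shows "(-1::real) ^ (t mod n) = (-1) ^ t"
proof -
  have ev: "even (t div n * n)" using assms by simp
  have one: "(-1::real) ^ (t div n * n) = 1" using ev by simp
  have "(-1::real) ^ t = (-1) ^ (t div n * n) * (-1) ^ (t mod n)"
    by (simp only: power_add[symmetric] div_mult_mod_eq)
  then show ?thesis using one by simp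
qed

lemma ker_alt:
  assumes k: "k \<noteq> 0" and e: "even n" and n: "n > 0"
    and L: "a * (ev (Fp n) k - 1) + b * (ev (Gp n) k - k + 2) = 0"
  shows "\<forall>i<n. (\<Sum>j<n. FLseq k a b (Suc ((j + n - i) mod n)) * (-1) ^ j) = 0"
proof (intro allI impI)
  fix i assume i: "i < n"
  have "(\<Sum>j<n. FLseq k a b (Suc ((j + n - i) mod n)) * (-1) ^ j)
      = (\<Sum>m<n. FLseq k a b (Suc m) * (-1) ^ ((i + m) mod n))"
    by (rule reindex[OF i])
  also have "\<dots> = (\<Sum>m<n. (-1) ^ i * ((-1) ^ m * FLseq k a b (Suc m)))"
    by (intro sum.cong) (simp_all add: neg1_mod[OF e] power_add)
  also have "\<dots> = (-1) ^ i * (\<Sum>m<n. (-1) ^ m * FLseq k a b (Suc m))"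
    by (simp add: sum_distrib_left)
  also have "(\<Sum>m<n. (-1) ^ m * FLseq k a b (Suc m)) = 0"
  proof -
    have "k * (\<Sum>m<n. (-1) ^ m * FLseq k a b (Suc m))
        = (-1) ^ (Suc n) * (FLseq k a b (Suc n) - FLseq k a b n) + (FLseq k a b 1 - FLseq k a b 0)"
      by (rule sum_alt)
    also have "\<dots> = - (b * ev (Gp n) k + a * ev (Fp n) k) + (b * k + a - 2 * b)"
      using e by (simp add: S_diff)
    also have "\<dots> = 0" using L by (simp add: algebra_simps)
    finally show ?thesis using k by simp
  qed
  finally show "(\<Sum>j<n. FLseq k a b (Suc ((j + n - i) mod n)) * (-1) ^ j) = 0" by simp
qed

lemma ker_one:
  assumes k: "k \<noteq> 0" and n: "n > 0"
    and L: "a * (ev (Pp n) k - 1) + b * (ev (Qp n) k - k - 2) = 0"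
  shows "\<forall>i<n. (\<Sum>j<n. FLseq k a b (Suc ((j + n - i) mod n)) * 1) = 0"
proof (intro allI impI)
  fix i assume i: "i < n"
  have "(\<Sum>j<n. FLseq k a b (Suc ((j + n - i) mod n)) * 1)
      = (\<Sum>m<n. FLseq k a b (Suc m) * 1)"
    by (rule reindex[OF i])
  also have "\<dots> = 0"
  proof -
    have "k * (\<Sum>m<n. FLseq k a b (Suc m))
        = FLseq k a b (Suc n) + FLseq k a b n - FLseq k a b 1 - FLseq k a b 0"
      by (rule sum_ones)
    also have "\<dots> = (b * ev (Qp n) k + a * ev (Pp n) k) - (b * k + a + 2 * b)"
      using S_sum[of k a b n] by simp
    also have "\<dots> = 0" using L by (simp add: algebra_simps)
    finally show ?thesis using k by simp
  qed
  finally show "(\<Sum>j<n. FLseq k a b (Suc ((j + n - i) mod n)) * 1) = 0" .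
qed

lemma kernel_rank:
  assumes n: "n > 0" and j0: "j0 < n" "f j0 \<noteq> 0"
    and K: "\<forall>i<n. (\<Sum>j<n. FLseq k a b (Suc ((j + n - i) mod n)) * f j) = 0"
  shows "matrank n (Bmat n k a b) \<le> n - 1"
proof -
  define w where "w = vec n f"
  have wc: "w \<in> carrier_vec n" unfolding w_def by simp
  have wnz: "w \<noteq> 0\<^sub>v n"
  proof
    assume "w = 0\<^sub>v n"
    then have "w $ j0 = 0" using j0 by simp
    then show False using j0 unfolding w_def by simp
  qed
  have "\<forall>i<n. (\<Sum>j<n. FLseq k a b (Suc ((j + n - i) mod n)) * w $ j) = 0"
    using K unfolding w_def by simp
  then have "Bmat n k a b *\<^sub>v w = 0\<^sub>v n" using Bmat_kernel[OF wc] by blast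
  then have "matrank n (Bmat n k a b) < n" using rank_lt_iff wc wnz by blast
  then show ?thesis by simp
qed

lemma U_mem: "(k, a, b) \<in> Uset n r \<longleftrightarrow> k \<notin> Bset n \<union> Cset n \<and> k \<noteq> 0 \<and>
    matrank n (Bmat n k a b) \<le> r \<and> 4 * a^3 + 27 * b^2 = 0 \<and> (a \<noteq> 0 \<or> b \<noteq> 0)"
  by (auto simp: Uset_def)

lemma U_rank:
  assumes n: "n \<ge> 4" and U: "(k, a, b) \<in> Uset n (n - 1)"
  shows "matrank n (Bmat n k a b) = n - 1"
proof -
  have U': "k \<noteq> 0" "matrank n (Bmat n k a b) \<le> n - 1" "a \<noteq> 0 \<or> b \<noteq> 0"
    using U unfolding U_mem by auto
  have "matrank n (Bmat n k a b) \<ge> n - 1"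
    by (rule rank_ge) (use n uv_nz[OF U'(1) _ U'(3), of n] in auto)
  then show ?thesis using U'(2) by simp
qed

lemma U_sub:
  assumes n: "n \<ge> 4" and e: "even n" and U: "(k, a, b) \<in> Uset n (n - 1)"
  shows "(a = a2 n k \<and> b = b2 n k) \<or> (a = a3 n k \<and> b = b3 n k)"
proof -
  have U': "k \<notin> Bset n \<union> Cset n" "k \<noteq> 0" "matrank n (Bmat n k a b) \<le> n - 1"
    "4 * a^3 + 27 * b^2 = 0" "a \<noteq> 0 \<or> b \<noteq> 0"
    using U unfolding U_mem by auto
  have "matrank n (Bmat n k a b) < n" using U'(3) n by simp
  then obtain w where w: "w \<in> carrier_vec n" "w \<noteq> 0\<^sub>v n" "Bmat n k a b *\<^sub>v w = 0\<^sub>v n"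
    using rank_lt_iff by blast
  have n0: "n > 0" using n by simp
  have F: "ev (Fp n) k - 1 \<noteq> 0" "ev (Gp n) k - k + 2 \<noteq> 0"
    "ev (Pp n) k - 1 \<noteq> 0" "ev (Qp n) k - k - 2 \<noteq> 0"
    using U'(1) unfolding Bset_def Cset_def by auto
  have D: "FLseq k a b (Suc n) - FLseq k a b n = b * ev (Gp n) k + a * ev (Fp n) k" by (rule S_diff)
  have Sm: "FLseq k a b (Suc n) + FLseq k a b n = b * ev (Qp n) k + a * ev (Pp n) k" by (rule S_sum)
  have S01: "FLseq k a b 1 = b * k + a" "FLseq k a b 0 = 2 * b" by simp_all
  from kernel_uv[OF n0 w] show ?thesis
  proof
    assume H: "FLseq k a b 1 - FLseq k a b (Suc n) = FLseq k a b 0 - FLseq k a b n"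
    have L: "a * (ev (Fp n) k - 1) + b * (ev (Gp n) k - k + 2) = 0"
      using H D S01 by (simp add: algebra_simps)
    have "a = a2 n k \<and> b = b2 n k"
      unfolding a2_def b2_def by (rule curve_fwd[OF F(1) F(2) L U'(4) U'(5)])
    then show ?thesis by simp
  next
    assume H: "FLseq k a b 1 - FLseq k a b (Suc n) = - (FLseq k a b 0 - FLseq k a b n)"
    have L: "a * (ev (Pp n) k - 1) + b * (ev (Qp n) k - k - 2) = 0"
      using H Sm S01 by (simp add: algebra_simps)
    have "a = a3 n k \<and> b = b3 n k"
      unfolding a3_def b3_def by (rule curve_fwd[OF F(3) F(4) L U'(4) U'(5)])
    then show ?thesis by simp
  qed
qed

lemma U_sup2:
  assumes n: "n \<ge> 4" and e: "even n" and k: "k \<notin> Bset n \<union> Cset n"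
  shows "(k, a2 n k, b2 n k) \<in> Uset n (n - 1)"
proof -
  have k0: "k \<noteq> 0" using k zero_in_B[OF e] by auto
  have F: "ev (Fp n) k - 1 \<noteq> 0" "ev (Gp n) k - k + 2 \<noteq> 0"
    using k unfolding Bset_def by auto
  note CB = curve_bwd[OF F]
  have L: "a2 n k * (ev (Fp n) k - 1) + b2 n k * (ev (Gp n) k - k + 2) = 0"
    using CB(1) unfolding a2_def b2_def .
  have n0: "n > 0" using n by simp
  have "matrank n (Bmat n k (a2 n k) (b2 n k)) \<le> n - 1"
    by (rule kernel_rank[of n 0 "\<lambda>j. (-1) ^ j"]) (use n0 ker_alt[OF k0 e n0 L] in auto)
  then show ?thesis unfolding U_mem using k k0 CB(2,3) unfolding a2_def b2_def by auto
qed

lemma U_sup3: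
  assumes n: "n \<ge> 4" and e: "even n" and k: "k \<notin> Bset n \<union> Cset n"
  shows "(k, a3 n k, b3 n k) \<in> Uset n (n - 1)"
proof -
  have k0: "k \<noteq> 0" using k zero_in_B[OF e] by auto
  have F: "ev (Pp n) k - 1 \<noteq> 0" "ev (Qp n) k - k - 2 \<noteq> 0"
    using k unfolding Cset_def by auto
  note CB = curve_bwd[OF F]
  have L: "a3 n k * (ev (Pp n) k - 1) + b3 n k * (ev (Qp n) k - k - 2) = 0"
    using CB(1) unfolding a3_def b3_def .
  have n0: "n > 0" using n by simp
  have "matrank n (Bmat n k (a3 n k) (b3 n k)) \<le> n - 1"
    by (rule kernel_rank[of n 0 "\<lambda>j. 1"]) (use n0 ker_one[OF k0 n0 L] in auto)
  then show ?thesis unfolding U_mem using k k0 CB(2,3) unfolding a3_def b3_def by auto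
qed

theorem theorem4p14:
  fixes n :: nat
  assumes "n \<ge> 4" and "even n"
  shows "(Uset n (n - 1) =
           {(k, a2 n k, b2 n k) | k. k \<notin> Bset n \<union> Cset n}
         \<union> {(k, a3 n k, b3 n k) | k. k \<notin> Bset n \<union> Cset n})
       \<and> finite {(k, a, b). (k, a, b) \<in> Uset n (n - 1) \<and> matrank n (Bmat n k a b) \<noteq> n - 1}
       \<and> (\<forall>r. 1 \<le> r \<and> r \<le> n - 2 \<longrightarrow>
           finite {(k, a, b). (k, a, b) \<in> Uset n (n - 1) \<and> matrank n (Bmat n k a b) = r})"
proof (intro conjI allI impI)
  show "Uset n (n - 1) =
           {(k, a2 n k, b2 n k) | k. k \<notin> Bset n \<union> Cset n}
         \<union> {(k, a3 n k, b3 n k) | k. k \<notin> Bset n \<union> Cset n}"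
  proof (rule Set.set_eqI)
    fix x :: "real \<times> real \<times> real"
    obtain k a b where x: "x = (k, a, b)" by (cases x) auto
    have 1: "x \<in> Uset n (n - 1) \<Longrightarrow> x \<in> {(k, a2 n k, b2 n k) | k. k \<notin> Bset n \<union> Cset n}
         \<union> {(k, a3 n k, b3 n k) | k. k \<notin> Bset n \<union> Cset n}"
    proof -
      assume xu: "x \<in> Uset n (n - 1)"
      then have kB: "k \<notin> Bset n \<union> Cset n" unfolding x U_mem by blast
      from U_sub[OF assms xu[unfolded x]] show ?thesis unfolding x using kB by blast
    qed
    have 2: "x \<in> Uset n (n - 1)" if "x \<in> {(k, a2 n k, b2 n k) | k. k \<notin> Bset n \<union> Cset n}
         \<union> {(k, a3 n k, b3 n k) | k. k \<notin> Bset n \<union> Cset n}"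
      using that U_sup2[OF assms] U_sup3[OF assms] by blast
    show "x \<in> Uset n (n - 1) \<longleftrightarrow> x \<in> {(k, a2 n k, b2 n k) | k. k \<notin> Bset n \<union> Cset n}
         \<union> {(k, a3 n k, b3 n k) | k. k \<notin> Bset n \<union> Cset n}"
      using 1 2 by blast
  qed
next
  show "finite {(k, a, b). (k, a, b) \<in> Uset n (n - 1) \<and> matrank n (Bmat n k a b) \<noteq> n - 1}"
    by (rule finite_subset[of _ "{}"]) (use U_rank[OF assms(1)] in auto)
next
  fix r :: nat assume r: "1 \<le> r \<and> r \<le> n - 2"
  show "finite {(k, a, b). (k, a, b) \<in> Uset n (n - 1) \<and> matrank n (Bmat n k a b) = r}"
    by (rule finite_subset[of _ "{}"]) (use U_rank[OF assms(1)] r assms(1) in auto)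
qed
end
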